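(* If $f_0,f_1,\dots,f_t\in F\langle X\rangle$ are $M_n$-locally linearly dependent while $f_1,\dots,f_t$ are $M_n$-locally linearly independent, then there exist central polynomials $c_0,c_1,\dots,c_t$ of $M_n$ such that $c_0$ is not a polynomial identity of $M_n$ and $\sum_{i=0}^tc_if_i$ is a polynomial identity of $M_n$.
   Context: $F$ is a field of characteristic $0$, $M_n=M_n(F)$, $F\langle X\rangle$ the free algebra on noncommuting $X=\{x_1,x_2,\dots\}$. Polynomials $f_1,\dots,f_t\in F\langle x_1,\dots,x_m\rangle$ are $M_n$-locally linearly dependent if $f_1(r_1,\dots,r_m),\dots,f_t(r_1,\dots,r_m)$ are linearly dependent over $F$ for all $r_1,\dots,r_m\in M_n$, and $M_n$-locally linearly independent otherwise. A central polynomial of $M_n$ is an element of $F\langle X\rangle$ all of whose evaluations in $M_n$ are scalar matrices; a polynomial identity is one all of whose evaluations are $0$. *)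

theory Defs
  imports "HOL-Analysis.Analysis" "HOL-Library.Poly_Mapping"
begin

text \<open>Noncommutative polynomials in the free algebra F<x_0, x_1, ...>:
  finitely supported functions from words (lists of variable indices) to F.\<close>
type_synonym 'a ncpoly = "nat list \<Rightarrow>\<^sub>0 'a"

definition ncmul :: "'a::comm_ring_1 ncpoly \<Rightarrow> 'a ncpoly \<Rightarrow> 'a ncpoly" where
  "ncmul p q = (\<Sum>u\<in>Poly_Mapping.keys p. \<Sum>v\<in>Poly_Mapping.keys q. Poly_Mapping.single (u @ v) (Poly_Mapping.lookup p u * Poly_Mapping.lookup q v))"

definition mat_smult :: "'a::times \<Rightarrow> 'a^'n^'m \<Rightarrow> 'a^'n^'m" (infixr "*\<^sub>M" 75) where
  "c *\<^sub>M M = (\<chi> i j. c * M $ i $ j)"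

definition word_eval :: "(nat \<Rightarrow> 'a::comm_ring_1 ^'n^'n) \<Rightarrow> nat list \<Rightarrow> 'a^'n^'n" where
  "word_eval r w = foldr (\<lambda>i M. r i ** M) w (mat 1)"

definition nc_eval :: "'a::comm_ring_1 ncpoly \<Rightarrow> (nat \<Rightarrow> 'a^'n^'n) \<Rightarrow> 'a^'n^'n" where
  "nc_eval p r = (\<Sum>w\<in>Poly_Mapping.keys p. Poly_Mapping.lookup p w *\<^sub>M word_eval r w)"

definition lin_dep_mats :: "(nat \<Rightarrow> 'a::field^'n^'n) \<Rightarrow> nat set \<Rightarrow> bool" where
  "lin_dep_mats A I \<longleftrightarrow> (\<exists>a. (\<exists>i\<in>I. a i \<noteq> 0) \<and> (\<Sum>i\<in>I. a i *\<^sub>M A i) = 0)"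

definition loc_lin_dep :: "'n::finite itself \<Rightarrow> (nat \<Rightarrow> 'a::field ncpoly) \<Rightarrow> nat set \<Rightarrow> bool" where
  "loc_lin_dep _ f I \<longleftrightarrow>
     (\<forall>r :: nat \<Rightarrow> 'a^'n^'n. lin_dep_mats (\<lambda>i. nc_eval (f i) r) I)"

definition central_poly :: "'n::finite itself \<Rightarrow> 'a::field ncpoly \<Rightarrow> bool" where
  "central_poly _ c \<longleftrightarrow> (\<forall>r :: nat \<Rightarrow> 'a^'n^'n. \<exists>s. nc_eval c r = mat s)"

definition poly_identity :: "'n::finite itself \<Rightarrow> 'a::field ncpoly \<Rightarrow> bool" where
  "poly_identity _ p \<longleftrightarrow> (\<forall>r :: nat \<Rightarrow> 'a^'n^'n. nc_eval p r = 0)"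

end

theory Submission
  imports Defs
begin

lemma mat_smult_comp[simp]: "(c *\<^sub>M A) $ i $ j = c * A $ i $ j"
  by (simp add: mat_smult_def)

lemma mat_smult_0[simp]: "0 *\<^sub>M (A::'a::comm_ring_1^'n^'m) = 0" "c *\<^sub>M 0 = (0::'a::comm_ring_1^'n^'m)"
  by (simp_all add: vec_eq_iff)

lemma mat_smult_add: "(c + d) *\<^sub>M A = c *\<^sub>M A + d *\<^sub>M (A::'a::comm_ring_1^'n^'m)"
  "c *\<^sub>M (A + B) = c *\<^sub>M A + c *\<^sub>M (B::'a::comm_ring_1^'n^'m)"
  by (simp_all add: vec_eq_iff algebra_simps)

lemma mat_smult_assoc[simp]: "c *\<^sub>M (d *\<^sub>M A) = (c * d) *\<^sub>M (A::'a::comm_ring_1^'n^'m)"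
  by (simp add: vec_eq_iff)

lemma mat_smult_1[simp]: "1 *\<^sub>M A = (A::'a::comm_ring_1^'n^'m)"
  by (simp add: vec_eq_iff)

lemma mat_smult_sum: "(\<Sum>i\<in>S. f i) *\<^sub>M A = (\<Sum>i\<in>S. f i *\<^sub>M (A::'a::comm_ring_1^'n^'m))"
  by (induct S rule: infinite_finite_induct) (simp_all add: mat_smult_add)

lemma mat_smult_sum2: "c *\<^sub>M (\<Sum>i\<in>S. A i) = (\<Sum>i\<in>S. c *\<^sub>M (A i::'a::comm_ring_1^'n^'m))"
  by (induct S rule: infinite_finite_induct) (simp_all add: mat_smult_add)

lemma mat_smult_neg[simp]: "(- c) *\<^sub>M A = - (c *\<^sub>M (A::'a::comm_ring_1^'n^'m))"
  "c *\<^sub>M (- A) = - (c *\<^sub>M (A::'a::comm_ring_1^'n^'m))"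
  by (simp_all add: vec_eq_iff)

lemma mat_smult_mul[simp]: "(c *\<^sub>M A) ** B = c *\<^sub>M (A ** (B::'a::comm_ring_1^'k^'n))"
  "A ** (c *\<^sub>M B) = c *\<^sub>M (A ** (B::'a::comm_ring_1^'k^'n))"
  by (simp_all add: vec_eq_iff matrix_matrix_mult_def sum_distrib_left mult_ac)

lemma matrix_add_rdistrib: "((B + C) ** A) = (B ** A) + (C ** (A::'a::comm_ring_1^'k^'n))"
  by (vector matrix_matrix_mult_def sum.distrib[symmetric] field_simps)

lemma matrix_mul_lsum: "(\<Sum>i\<in>S. A i) ** (B::'a::comm_ring_1^'k^'n) = (\<Sum>i\<in>S. A i ** B)"
  by (induct S rule: infinite_finite_induct) (simp_all add: matrix_add_rdistrib)

lemma matrix_mul_rsum: "(B::'a::comm_ring_1^'k^'n) ** (\<Sum>i\<in>S. A i) = (\<Sum>i\<in>S. B ** A i)"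
  by (induct S rule: infinite_finite_induct) (simp_all add: matrix_add_ldistrib)

lemma mat_smult_mat: "c *\<^sub>M mat d = (mat (c * d)::'a::comm_ring_1^'n^'n)"
  by (simp add: vec_eq_iff mat_def)

lemma word_eval_Nil[simp]: "word_eval r [] = mat 1"
  by (simp add: word_eval_def)

lemma word_eval_Cons[simp]: "word_eval r (i # w) = r i ** word_eval r w"
  by (simp add: word_eval_def)

lemma word_eval_append: "word_eval r (u @ v) = word_eval r u ** word_eval r v"
  by (induct u) (simp_all add: matrix_mul_assoc)

lemma nc_eval_superset:
  assumes "finite S" "Poly_Mapping.keys p \<subseteq> S"
  shows "nc_eval p r = (\<Sum>w\<in>S. Poly_Mapping.lookup p w *\<^sub>M word_eval r w)"
  unfolding nc_eval_def
  by (rule sum.mono_neutral_left) (use assms in \<open>auto simp: in_keys_iff\<close>)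

lemma nc_eval_0[simp]: "nc_eval 0 r = 0"
  by (simp add: nc_eval_def)

lemma nc_eval_add: "nc_eval (p + q) r = nc_eval p r + nc_eval q r"
proof -
  let ?S = "Poly_Mapping.keys p \<union> Poly_Mapping.keys q"
  have f: "finite ?S" by simp
  have "nc_eval (p+q) r = (\<Sum>w\<in>?S. Poly_Mapping.lookup (p+q) w *\<^sub>M word_eval r w)"
    by (rule nc_eval_superset[OF f]) (simp add: Poly_Mapping.keys_add)
  also have "\<dots> = (\<Sum>w\<in>?S. Poly_Mapping.lookup p w *\<^sub>M word_eval r w) + (\<Sum>w\<in>?S. Poly_Mapping.lookup q w *\<^sub>M word_eval r w)"
    by (simp add: lookup_add mat_smult_add sum.distrib)
  also have "\<dots> = nc_eval p r + nc_eval q r"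
    by (simp add: nc_eval_superset[OF f])
  finally show ?thesis .
qed

lemma nc_eval_uminus: "nc_eval (- p) r = - nc_eval p r"
  unfolding nc_eval_def by (simp add: keys_minus sum_negf)

lemma nc_eval_diff: "nc_eval (p - q) r = nc_eval p r - nc_eval q r"
  using nc_eval_add[of p "-q" r] nc_eval_uminus[of q r] by simp

lemma nc_eval_sum: "nc_eval (\<Sum>i\<in>S. p i) r = (\<Sum>i\<in>S. nc_eval (p i) r)"
  by (induct S rule: infinite_finite_induct) (simp_all add: nc_eval_add)

lemma nc_eval_single: "nc_eval (Poly_Mapping.single w c) r = c *\<^sub>M word_eval r w"
  by (cases "c = 0") (simp_all add: nc_eval_def)

lemma nc_eval_ncmul: "nc_eval (ncmul p q) r = nc_eval p r ** nc_eval q r"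
proof -
  have "nc_eval (ncmul p q) r = (\<Sum>u\<in>Poly_Mapping.keys p. \<Sum>v\<in>Poly_Mapping.keys q.
     (Poly_Mapping.lookup p u * Poly_Mapping.lookup q v) *\<^sub>M (word_eval r u ** word_eval r v))"
    by (simp add: ncmul_def nc_eval_sum nc_eval_single word_eval_append)
  also have "\<dots> = nc_eval p r ** nc_eval q r"
    by (simp add: nc_eval_def matrix_mul_lsum matrix_mul_rsum mat_smult_sum2)
       (subst sum.swap, simp add: mult.commute)
  finally show ?thesis .
qed

type_synonym ('a,'n) sq = "'a^'n^'n"

definition multilin :: "(('s \<Rightarrow> 'a::comm_ring_1^'n^'n) \<Rightarrow> 'a^'m^'m) \<Rightarrow> bool" where
  "multilin G \<longleftrightarrow> (\<forall>M s u v c d. G (M(s := c *\<^sub>M u + d *\<^sub>M v)) = c *\<^sub>M G (M(s := u)) + d *\<^sub>M G (M(s := v)))"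

definition Alt :: "(('s::finite \<Rightarrow> 'a::comm_ring_1^'n^'n) \<Rightarrow> 'a^'m^'m) \<Rightarrow> ('s \<Rightarrow> 'a^'n^'n) \<Rightarrow> 'a^'m^'m" where
  "Alt G M = (\<Sum>\<sigma>\<in>{\<sigma>. \<sigma> permutes (UNIV::'s set)}. of_int (sign \<sigma>) *\<^sub>M G (M \<circ> \<sigma>))"

lemma multilinD: "multilin G \<Longrightarrow> G (M(s := c *\<^sub>M u + d *\<^sub>M v)) = c *\<^sub>M G (M(s := u)) + d *\<^sub>M G (M(s := v))"
  unfolding multilin_def by blast

lemma multilin_zero: assumes "multilin G" shows "G (M(s := 0)) = 0"
  using multilinD[OF assms, of M s 0 0 0 0] by simp

lemma multilin_scale: assumes "multilin G" shows "G (M(s := c *\<^sub>M u)) = c *\<^sub>M G (M(s := u))"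
  using multilinD[OF assms, of M s c u 0 0] by simp

lemma multilin_add: assumes "multilin G" shows "G (M(s := u + v)) = G (M(s := u)) + G (M(s := v))"
  using multilinD[OF assms, of M s 1 u 1 v] by simp

lemma multilin_sum:
  assumes "multilin G" "finite K"
  shows "G (M(s := \<Sum>k\<in>K. c k *\<^sub>M u k)) = (\<Sum>k\<in>K. c k *\<^sub>M G (M(s := u k)))"
  using assms(2)
proof (induct K)
  case empty
  have "G (M(s:=0)) = 0" by (rule multilin_zero[OF assms(1)])
  thus ?case by (simp only: sum.empty)
next
  case (insert x F)
  have "G (M(s := \<Sum>k\<in>insert x F. c k *\<^sub>M u k)) = G (M(s := c x *\<^sub>M u x + (\<Sum>k\<in>F. c k *\<^sub>M u k)))"
    using insert(1,2) by (subst sum.insert) auto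
  also have "\<dots> = c x *\<^sub>M G (M(s := u x)) + G (M(s := (\<Sum>k\<in>F. c k *\<^sub>M u k)))"
    by (simp only: multilin_add[OF assms(1)] multilin_scale[OF assms(1)])
  also have "\<dots> = c x *\<^sub>M G (M(s := u x)) + (\<Sum>k\<in>F. c k *\<^sub>M G (M(s := u k)))"
    by (simp only: insert(3))
  also have "\<dots> = (\<Sum>k\<in>insert x F. c k *\<^sub>M G (M(s := u k)))"
    using insert(1,2) by (subst sum.insert) auto
  finally show ?case .
qed

lemma upd_comp_perm:
  assumes "\<sigma> permutes UNIV"
  shows "(M(s := x)) \<circ> \<sigma> = (M \<circ> \<sigma>)(inv \<sigma> s := x)"
  using assms by (auto simp: fun_eq_iff permutes_inverses)

lemma multilin_Alt: assumes "multilin G" shows "multilin (Alt G)"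
  unfolding multilin_def Alt_def
proof (intro allI)
  fix M s u v c d
  have "\<And>\<sigma>. \<sigma> permutes UNIV \<Longrightarrow> G ((M(s := c *\<^sub>M u + d *\<^sub>M v)) \<circ> \<sigma>) =
     c *\<^sub>M G ((M(s := u)) \<circ> \<sigma>) + d *\<^sub>M G ((M(s := v)) \<circ> \<sigma>)"
    by (simp add: upd_comp_perm multilinD[OF assms])
  then show "(\<Sum>\<sigma>\<in>{\<sigma>. \<sigma> permutes UNIV}. of_int (sign \<sigma>) *\<^sub>M G (M(s := c *\<^sub>M u + d *\<^sub>M v) \<circ> \<sigma>)) =
       c *\<^sub>M (\<Sum>\<sigma>\<in>{\<sigma>. \<sigma> permutes UNIV}. of_int (sign \<sigma>) *\<^sub>M G (M(s := u) \<circ> \<sigma>)) +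
       d *\<^sub>M (\<Sum>\<sigma>\<in>{\<sigma>. \<sigma> permutes UNIV}. of_int (sign \<sigma>) *\<^sub>M G (M(s := v) \<circ> \<sigma>))"
    by (simp add: mat_smult_sum2 mat_smult_add sum.distrib mult.commute)
qed

lemma Alt_perm:
  fixes G :: "('s::finite \<Rightarrow> 'a::comm_ring_1^'n^'n) \<Rightarrow> 'a^'m^'m"
  assumes p: "\<pi> permutes (UNIV::'s set)"
  shows "Alt G (M \<circ> \<pi>) = of_int (sign \<pi>) *\<^sub>M Alt G M"
proof -
  have ip: "inv \<pi> permutes UNIV" using permutes_inv[OF p] .
  have "Alt G (M \<circ> \<pi>) = (\<Sum>\<sigma>\<in>{\<sigma>. \<sigma> permutes (UNIV::'s set)}. of_int (sign (inv \<pi> \<circ> \<sigma>)) *\<^sub>M G (M \<circ> \<pi> \<circ> (inv \<pi> \<circ> \<sigma>)))"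
    unfolding Alt_def by (rule setum_permutations_compose_left[OF ip])
  also have "\<dots> = (\<Sum>\<sigma>\<in>{\<sigma>. \<sigma> permutes (UNIV::'s set)}. of_int (sign \<pi>) *\<^sub>M (of_int (sign \<sigma>) *\<^sub>M G (M \<circ> \<sigma>)))"
  proof (rule sum.cong)
    fix \<sigma> assume "\<sigma> \<in> {\<sigma>. \<sigma> permutes (UNIV::'s set)}"
    hence s: "\<sigma> permutes UNIV" by simp
    have pp: "permutation \<pi>" "permutation \<sigma>" "permutation (inv \<pi>)"
      using p s ip by (auto simp: permutation_permutes)
    have "sign (inv \<pi> \<circ> \<sigma>) = sign \<pi> * sign \<sigma>"
      using sign_compose[OF pp(3) pp(2)] sign_inverse[OF pp(1)] by simp
    moreover have "\<pi> \<circ> (inv \<pi> \<circ> \<sigma>) = \<sigma>"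
      by (simp add: o_assoc permutes_inv_o(1)[OF p])
    hence "M \<circ> \<pi> \<circ> (inv \<pi> \<circ> \<sigma>) = M \<circ> \<sigma>" by (simp add: o_assoc[symmetric])
    ultimately show "of_int (sign (inv \<pi> \<circ> \<sigma>)) *\<^sub>M G (M \<circ> \<pi> \<circ> (inv \<pi> \<circ> \<sigma>)) =
        of_int (sign \<pi>) *\<^sub>M (of_int (sign \<sigma>) *\<^sub>M G (M \<circ> \<sigma>))" by simp
  qed simp
  also have "\<dots> = of_int (sign \<pi>) *\<^sub>M Alt G M"
    unfolding Alt_def by (simp add: mat_smult_sum2)
  finally show ?thesis .
qed

lemma Alt_eq_slots:
  fixes G :: "('s::finite \<Rightarrow> 'a::field_char_0^'n^'n) \<Rightarrow> 'a^'m^'m"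
  assumes "s \<noteq> s'" "M s = M s'"
  shows "Alt G M = 0"
proof -
  let ?t = "Transposition.transpose s s'"
  have tp: "?t permutes UNIV" by (rule permutes_swap_id) auto
  have Mt: "M \<circ> ?t = M" using assms by (auto simp: fun_eq_iff Transposition.transpose_def)
  have "Alt G M = Alt G (M \<circ> ?t)" using Mt by simp
  also have "\<dots> = - Alt G M"
    using Alt_perm[OF tp, of G M] assms(1) by (simp add: sign_swap_id)
  finally have "Alt G M + Alt G M = 0" by (simp add: eq_neg_iff_add_eq_0)
  hence "\<forall>i j. Alt G M $ i $ j + Alt G M $ i $ j = 0" by (simp add: vec_eq_iff)
  thus ?thesis by (simp add: vec_eq_iff)
qed

definition Eu :: "'n::finite \<times> 'n \<Rightarrow> 'a::comm_ring_1^'n^'n" where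
  "Eu k = (\<chi> a b. if a = fst k \<and> b = snd k then 1 else 0)"

definition coord :: "'a::comm_ring_1^'n^'n \<Rightarrow> 'n \<times> 'n \<Rightarrow> 'a" where
  "coord A k = A $ fst k $ snd k"

lemma decomp: "A = (\<Sum>k\<in>UNIV. coord A k *\<^sub>M (Eu k :: 'a::comm_ring_1^'n::finite^'n))"
proof -
  have "\<And>i j. (\<Sum>k\<in>UNIV. coord A k * (Eu k :: 'a^'n^'n) $ i $ j) = A $ i $ j"
  proof -
    fix i j
    have "(\<Sum>k\<in>UNIV. coord A k * (Eu k :: 'a^'n^'n) $ i $ j) = (\<Sum>k\<in>UNIV. if k = (i,j) then A $ i $ j else 0)"
      by (rule sum.cong) (auto simp: Eu_def coord_def)
    thus "?thesis i j" by simp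
  qed
  thus ?thesis by (simp add: vec_eq_iff)
qed

lemma expand_gen:
  fixes \<phi> :: "('n::finite \<times> 'n \<Rightarrow> 'a::comm_ring_1^'n^'n) \<Rightarrow> 'a^'m^'m"
  assumes ml: "multilin \<phi>" and fin: "finite T"
  shows "\<phi> (\<lambda>s. if s \<in> T then M s else C s) =
    (\<Sum>g\<in>PiE T (\<lambda>_. UNIV). (\<Prod>s\<in>T. coord (M s) (g s)) *\<^sub>M \<phi> (\<lambda>s. if s \<in> T then Eu (g s) else C s))"
  using fin
proof (induct T arbitrary: C)
  case empty
  show ?case by simp
next
  case (insert z T C)
  let ?N = "\<lambda>g s. if s \<in> T then Eu (g s) else C s"
  have e1: "(\<lambda>s. if s \<in> insert z T then M s else C s) = (\<lambda>s. if s \<in> T then M s else (C(z := M z)) s)"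
    using insert(2) by auto
  have e2: "\<And>g. (\<lambda>s. if s \<in> T then Eu (g s) else (C(z := M z)) s) = (?N g)(z := M z)"
    using insert(2) by auto
  have "\<phi> (\<lambda>s. if s \<in> insert z T then M s else C s) =
     (\<Sum>g\<in>PiE T (\<lambda>_. UNIV). (\<Prod>s\<in>T. coord (M s) (g s)) *\<^sub>M \<phi> ((?N g)(z := M z)))"
    unfolding e1 insert(3) e2 ..
  also have "\<dots> = (\<Sum>g\<in>PiE T (\<lambda>_. UNIV). (\<Prod>s\<in>T. coord (M s) (g s)) *\<^sub>M
        (\<Sum>k\<in>UNIV. coord (M z) k *\<^sub>M \<phi> ((?N g)(z := Eu k))))"
  proof (rule sum.cong[OF refl])
    fix g
    have "\<phi> ((?N g)(z := M z)) = \<phi> ((?N g)(z := \<Sum>k\<in>UNIV. coord (M z) k *\<^sub>M Eu k))"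
      by (subst decomp[of "M z"]) (rule refl)
    also have "\<dots> = (\<Sum>k\<in>UNIV. coord (M z) k *\<^sub>M \<phi> ((?N g)(z := Eu k)))"
      by (rule multilin_sum[OF ml]) simp
    finally show "(\<Prod>s\<in>T. coord (M s) (g s)) *\<^sub>M \<phi> ((?N g)(z := M z)) = (\<Prod>s\<in>T. coord (M s) (g s)) *\<^sub>M
        (\<Sum>k\<in>UNIV. coord (M z) k *\<^sub>M \<phi> ((?N g)(z := Eu k)))" by simp
  qed
  also have "\<dots> = (\<Sum>(k,g)\<in>UNIV \<times> PiE T (\<lambda>_. UNIV). (coord (M z) k * (\<Prod>s\<in>T. coord (M s) (g s))) *\<^sub>M \<phi> ((?N g)(z := Eu k)))"
  proof -
    have "(\<Sum>g\<in>PiE T (\<lambda>_. UNIV). (\<Prod>s\<in>T. coord (M s) (g s)) *\<^sub>M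
        (\<Sum>k\<in>UNIV. coord (M z) k *\<^sub>M \<phi> ((?N g)(z := Eu k)))) =
      (\<Sum>g\<in>PiE T (\<lambda>_. UNIV). \<Sum>k\<in>UNIV. (coord (M z) k * (\<Prod>s\<in>T. coord (M s) (g s))) *\<^sub>M \<phi> ((?N g)(z := Eu k)))"
      by (simp add: mat_smult_sum2 mult.commute)
    also have "\<dots> = (\<Sum>k\<in>UNIV. \<Sum>g\<in>PiE T (\<lambda>_. UNIV). (coord (M z) k * (\<Prod>s\<in>T. coord (M s) (g s))) *\<^sub>M \<phi> ((?N g)(z := Eu k)))"
      by (rule sum.swap)
    also have "\<dots> = (\<Sum>(k,g)\<in>UNIV \<times> PiE T (\<lambda>_. UNIV). (coord (M z) k * (\<Prod>s\<in>T. coord (M s) (g s))) *\<^sub>M \<phi> ((?N g)(z := Eu k)))"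
      by (rule sum.cartesian_product)
    finally show ?thesis .
  qed
  also have "\<dots> = (\<Sum>h\<in>PiE (insert z T) (\<lambda>_. UNIV). (\<Prod>s\<in>insert z T. coord (M s) (h s)) *\<^sub>M \<phi> (\<lambda>s. if s \<in> insert z T then Eu (h s) else C s))"
  proof -
    have inj: "inj_on (\<lambda>(y, g). g(z := y)) (UNIV \<times> PiE T (\<lambda>_. UNIV))"
      using inj_combinator[OF insert(2), of "\<lambda>_. UNIV"] by simp
    have "(\<Sum>h\<in>PiE (insert z T) (\<lambda>_. UNIV). (\<Prod>s\<in>insert z T. coord (M s) (h s)) *\<^sub>M \<phi> (\<lambda>s. if s \<in> insert z T then Eu (h s) else C s))
       = (\<Sum>(k,g)\<in>UNIV \<times> PiE T (\<lambda>_. UNIV). (\<Prod>s\<in>insert z T. coord (M s) ((g(z:=k)) s)) *\<^sub>M \<phi> (\<lambda>s. if s \<in> insert z T then Eu ((g(z:=k)) s) else C s))"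
      unfolding PiE_insert_eq by (subst sum.reindex[OF inj]) (simp add: case_prod_unfold)
    also have "\<dots> = (\<Sum>(k,g)\<in>UNIV \<times> PiE T (\<lambda>_. UNIV). (coord (M z) k * (\<Prod>s\<in>T. coord (M s) (g s))) *\<^sub>M \<phi> ((?N g)(z := Eu k)))"
    proof (rule sum.cong[OF refl], clarify)
      fix k g
      have p: "(\<Prod>s\<in>insert z T. coord (M s) ((g(z:=k)) s)) = coord (M z) k * (\<Prod>s\<in>T. coord (M s) (g s))"
      proof -
        have "(\<Prod>s\<in>T. coord (M s) ((g(z:=k)) s)) = (\<Prod>s\<in>T. coord (M s) (g s))"
          using insert(2) by (intro prod.cong) auto
        thus ?thesis using insert(1,2) by (simp add: prod.insert)
      qed
      have q: "(\<lambda>s. if s \<in> insert z T then Eu ((g(z:=k)) s) else C s) = (?N g)(z := Eu k)"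
        using insert(2) by auto
      show "(\<Prod>s\<in>insert z T. coord (M s) ((g(z:=k)) s)) *\<^sub>M \<phi> (\<lambda>s. if s \<in> insert z T then Eu ((g(z:=k)) s) else C s) =
        (coord (M z) k * (\<Prod>s\<in>T. coord (M s) (g s))) *\<^sub>M \<phi> ((?N g)(z := Eu k))"
        unfolding p q ..
    qed
    finally show ?thesis by simp
  qed
  finally show ?case .
qed

lemma expand:
  fixes \<phi> :: "('n::finite \<times> 'n \<Rightarrow> 'a::comm_ring_1^'n^'n) \<Rightarrow> 'a^'m^'m"
  assumes ml: "multilin \<phi>"
  shows "\<phi> M = (\<Sum>g\<in>UNIV. (\<Prod>s\<in>UNIV. coord (M s) (g s)) *\<^sub>M \<phi> (Eu \<circ> g))"
  using expand_gen[OF ml, of UNIV M M] by (simp add: o_def)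

definition Dt :: "('n::finite \<times> 'n \<Rightarrow> 'a::comm_ring_1^'n^'n) \<Rightarrow> 'a" where
  "Dt M = det (\<chi> s k. coord (M s) k)"

lemma Alt_det:
  fixes G :: "('n::finite \<times> 'n \<Rightarrow> 'a::field_char_0^'n^'n) \<Rightarrow> 'a^'m^'m"
  assumes ml: "multilin G"
  shows "Alt G M = Dt M *\<^sub>M Alt G Eu"
proof -
  have mla: "multilin (Alt G)" by (rule multilin_Alt[OF ml])
  have "Alt G M = (\<Sum>g\<in>UNIV. (\<Prod>s\<in>UNIV. coord (M s) (g s)) *\<^sub>M Alt G (Eu \<circ> g))"
    by (rule expand[OF mla])
  also have "\<dots> = (\<Sum>g\<in>{g. g permutes UNIV}. (\<Prod>s\<in>UNIV. coord (M s) (g s)) *\<^sub>M Alt G (Eu \<circ> g))"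
  proof (rule sum.mono_neutral_right)
    show "\<forall>g\<in>UNIV - {g. g permutes UNIV}. (\<Prod>s\<in>UNIV. coord (M s) (g s)) *\<^sub>M Alt G (Eu \<circ> g) = 0"
    proof
      fix g :: "'n \<times> 'n \<Rightarrow> 'n \<times> 'n"
      assume "g \<in> UNIV - {g. g permutes UNIV}"
      hence "\<not> inj g"
        using finite_UNIV_inj_surj[of g] bij_imp_permutes[of g UNIV] by (auto simp: bij_def)
      then obtain s s' where "s \<noteq> s'" "g s = g s'" by (auto simp: inj_def)
      hence "Alt G (Eu \<circ> g) = 0" by (rule_tac Alt_eq_slots[of s s']) auto
      thus "(\<Prod>s\<in>UNIV. coord (M s) (g s)) *\<^sub>M Alt G (Eu \<circ> g) = 0" by simp
    qed
  qed auto
  also have "\<dots> = (\<Sum>g\<in>{g. g permutes UNIV}. (of_int (sign g) * (\<Prod>s\<in>UNIV. coord (M s) (g s))) *\<^sub>M Alt G Eu)"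
    by (rule sum.cong) (auto simp: Alt_perm mult.commute)
  also have "\<dots> = Dt M *\<^sub>M Alt G Eu"
    by (simp add: Dt_def det_def mat_smult_sum)
  finally show ?thesis .
qed

lemma trace_sum_lemma:
  fixes G :: "('n::finite \<times> 'n \<Rightarrow> 'a::field_char_0^'n^'n) \<Rightarrow> 'a^'m^'m"
  assumes ml: "multilin G"
  shows "(\<Sum>s\<in>UNIV. Alt G (Eu(s := Z ** Eu s))) = (of_nat CARD('n) * trace Z) *\<^sub>M Alt G Eu"
proof -
  have mla: "multilin (Alt G)" by (rule multilin_Alt[OF ml])
  have one: "Alt G (Eu(s := Z ** Eu s)) = coord (Z ** Eu s) s *\<^sub>M Alt G Eu" for s
  proof -
    have "Alt G (Eu(s := Z ** Eu s)) = Alt G (Eu(s := \<Sum>k\<in>UNIV. coord (Z ** Eu s) k *\<^sub>M Eu k))"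
      by (subst decomp[of "Z ** Eu s"]) (rule refl)
    also have "\<dots> = (\<Sum>k\<in>UNIV. coord (Z ** Eu s) k *\<^sub>M Alt G (Eu(s := Eu k)))"
      by (rule multilin_sum[OF mla]) simp
    also have "\<dots> = (\<Sum>k\<in>UNIV. if k = s then coord (Z ** Eu s) s *\<^sub>M Alt G Eu else 0)"
    proof (rule sum.cong[OF refl])
      fix k
      show "coord (Z ** Eu s) k *\<^sub>M Alt G (Eu(s := Eu k)) = (if k = s then coord (Z ** Eu s) s *\<^sub>M Alt G Eu else 0)"
      proof (cases "k = s")
        case False
        hence "Alt G (Eu(s := Eu k)) = 0" by (intro Alt_eq_slots[of s k]) auto
        thus ?thesis using False by simp
      qed simp
    qed
    also have "\<dots> = coord (Z ** Eu s) s *\<^sub>M Alt G Eu" by simp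
    finally show ?thesis .
  qed
  have c: "coord (Z ** Eu s) s = Z $ fst s $ fst s" for s
  proof -
    have "coord (Z ** Eu s) s = (\<Sum>l\<in>UNIV. Z $ fst s $ l * (if l = fst s then 1 else 0))"
      by (simp add: coord_def matrix_matrix_mult_def Eu_def)
    also have "\<dots> = Z $ fst s $ fst s" by (simp add: if_distrib cong: if_cong)
    finally show ?thesis .
  qed
  have "(\<Sum>s\<in>UNIV. coord (Z ** Eu s) s) = (\<Sum>s\<in>(UNIV::('n\<times>'n) set). Z $ fst s $ fst s)"
    by (simp add: c)
  also have "\<dots> = (\<Sum>i\<in>UNIV. \<Sum>j\<in>(UNIV::'n set). Z $ i $ i)"
  proof -
    have "(\<Sum>i\<in>UNIV. \<Sum>j\<in>(UNIV::'n set). Z $ i $ i) = (\<Sum>(i,j)\<in>UNIV \<times> (UNIV::'n set). Z $ i $ i)"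
      by (rule sum.cartesian_product)
    thus ?thesis by (simp add: case_prod_unfold)
  qed
  also have "\<dots> = of_nat CARD('n) * trace Z"
    by (simp add: trace_def sum_distrib_left mult.commute)
  finally have s: "(\<Sum>s\<in>UNIV. coord (Z ** Eu s) s) = of_nat CARD('n) * trace Z" .
  show ?thesis by (simp add: one s[symmetric] mat_smult_sum)
qed

definition mprod :: "('a::comm_ring_1^'n^'n) list \<Rightarrow> 'a^'n^'n" where
  "mprod xs = foldr (**) xs (mat 1)"

lemma mprod_Nil[simp]: "mprod [] = mat 1" and mprod_Cons[simp]: "mprod (x # xs) = x ** mprod xs"
  by (simp_all add: mprod_def)

lemma mprod_append: "mprod (xs @ ys) = mprod xs ** mprod ys"
  by (induct xs) (simp_all add: matrix_mul_assoc)

lemma mprod_update_lin: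
  "i < length xs \<Longrightarrow> mprod (xs[i := c *\<^sub>M u + d *\<^sub>M v]) = c *\<^sub>M mprod (xs[i := u]) + d *\<^sub>M mprod (xs[i := v])"
proof (induct xs arbitrary: i)
  case Nil thus ?case by simp
next
  case (Cons x xs i)
  show ?case
  proof (cases i)
    case 0 thus ?thesis by (simp add: matrix_add_rdistrib)
  next
    case (Suc j) thus ?thesis using Cons by (simp add: matrix_add_ldistrib)
  qed
qed

lemma mprod_update_mid:
  "i < length xs \<Longrightarrow> mprod (xs[i := Z ** xs ! i]) = mprod (take i xs) ** Z ** mprod (drop i xs)"
  by (simp add: upd_conv_take_nth_drop mprod_append Cons_nth_drop_Suc[symmetric] matrix_mul_assoc)

definition kap :: "nat \<Rightarrow> 'n::finite \<times> 'n" where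
  "kap = (SOME h. bij_betw h {0..<CARD('n \<times> 'n)} UNIV)"

lemma kap_bij: "bij_betw (kap :: nat \<Rightarrow> 'n::finite \<times> 'n) {0..<CARD('n \<times> 'n)} UNIV"
proof -
  have "\<exists>h. bij_betw h {0..<CARD('n \<times> 'n)} (UNIV :: ('n \<times> 'n) set)"
    using ex_bij_betw_nat_finite[of "UNIV :: ('n \<times> 'n) set"] by simp
  thus ?thesis unfolding kap_def by (rule someI_ex)
qed

definition kinv :: "'n::finite \<times> 'n \<Rightarrow> nat" where
  "kinv s = the_inv_into {0..<CARD('n \<times> 'n)} kap s"

lemma kinv_lt: "kinv (s :: 'n::finite \<times> 'n) < CARD('n \<times> 'n)"
proof -
  have i: "inj_on (kap :: nat \<Rightarrow> 'n \<times> 'n) {0..<CARD('n \<times> 'n)}" and s: "s \<in> kap ` {0..<CARD('n \<times> 'n)}"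
    using kap_bij[where 'n='n] by (auto simp: bij_betw_def)
  have "kinv s \<in> {0..<CARD('n \<times> 'n)}" unfolding kinv_def
    by (rule the_inv_into_into[OF i s subset_refl])
  thus ?thesis by simp
qed

lemma kinv_lt'[simp]: "kinv (s :: 'n::finite \<times> 'n) < CARD('n) * CARD('n)"
  using kinv_lt[of s] by simp

lemma kap_kinv[simp]: "kap (kinv (s :: 'n::finite \<times> 'n)) = s"
  using kap_bij[where 'n='n] unfolding kinv_def
  by (simp add: bij_betw_def f_the_inv_into_f)

lemma kinv_kap[simp]: "m < CARD('n::finite \<times> 'n) \<Longrightarrow> kinv (kap m :: 'n \<times> 'n) = m"
  using kap_bij[where 'n='n] unfolding kinv_def
  by (simp add: bij_betw_def the_inv_into_f_f)

lemma kap_inj: "m < CARD('n::finite \<times> 'n) \<Longrightarrow> m' < CARD('n \<times> 'n) \<Longrightarrow> (kap m :: 'n \<times> 'n) = kap m' \<Longrightarrow> m = m'"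
proof -
  assume a: "m < CARD('n \<times> 'n)" "m' < CARD('n \<times> 'n)" "(kap m :: 'n \<times> 'n) = kap m'"
  have "m = kinv (kap m :: 'n \<times> 'n)" using a(1) by simp
  also have "\<dots> = kinv (kap m' :: 'n \<times> 'n)" using a(3) by simp
  also have "\<dots> = m'" using a(2) by simp
  finally show ?thesis .
qed

definition L0 :: "(nat \<Rightarrow> 'a::comm_ring_1^'n^'n) \<Rightarrow> ('n::finite \<times> 'n \<Rightarrow> 'a^'n^'n) \<Rightarrow> ('a^'n^'n) list" where
  "L0 Y M = map (\<lambda>i. if even i then M (kap (i div 2)) else Y (i div 2)) [0..<2 * CARD('n \<times> 'n)]"

lemma length_L0[simp]: "length (L0 Y (M :: 'n::finite \<times> 'n \<Rightarrow> 'a::comm_ring_1^'n^'n)) = 2 * CARD('n \<times> 'n)"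
  by (simp add: L0_def)

lemma nth_L0: "i < 2 * CARD('n \<times> 'n) \<Longrightarrow> L0 Y (M :: 'n::finite \<times> 'n \<Rightarrow> 'a::comm_ring_1^'n^'n) ! i = (if even i then M (kap (i div 2)) else Y (i div 2))"
  by (simp add: L0_def)

lemma L0_upd: "L0 Y (M(s := u)) = (L0 Y (M :: 'n::finite \<times> 'n \<Rightarrow> 'a::comm_ring_1^'n^'n))[2 * kinv s := u]"
proof (rule nth_equalityI)
  fix i assume i: "i < length (L0 Y (M(s := u)))"
  hence i': "i < 2 * CARD('n \<times> 'n)" by simp
  have k: "kinv s < CARD('n \<times> 'n)" by (rule kinv_lt)
  show "L0 Y (M(s := u)) ! i = (L0 Y M)[2 * kinv s := u] ! i"
  proof (cases "i = 2 * kinv s")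
    case True thus ?thesis using i' by (simp add: nth_L0)
  next
    case False
    have "even i \<Longrightarrow> kap (i div 2) \<noteq> s"
    proof
      assume "even i" "kap (i div 2) = s"
      have "i div 2 < CARD('n \<times> 'n)" using i' by simp
      hence "kinv s = i div 2" using \<open>kap (i div 2) = s\<close> kinv_kap by metis
      thus False using False \<open>even i\<close> by auto
    qed
    thus ?thesis using False i' by (simp add: nth_L0)
  qed
qed simp

definition Cw :: "(nat \<Rightarrow> 'a::comm_ring_1^'n^'n) \<Rightarrow> ('n::finite \<times> 'n \<Rightarrow> 'a^'n^'n) \<Rightarrow> 'a^'n^'n" where
  "Cw Y M = mprod (L0 Y M)"

definition Gw :: "(nat \<Rightarrow> 'a::comm_ring_1^'n^'n) \<Rightarrow> 'a^'n^'n \<Rightarrow> ('n::finite \<times> 'n \<Rightarrow> 'a^'n^'n) \<Rightarrow> 'a^'n^'n" where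
  "Gw Y W M = (\<Sum>k<CARD('n \<times> 'n). mprod (drop (2*k) (L0 Y M)) ** W ** mprod (take (2*k) (L0 Y M)))"

lemma multilin_Cw: "multilin (Cw Y)"
  unfolding multilin_def Cw_def L0_upd
  by (intro allI mprod_update_lin) (simp add: kinv_lt)

lemma multilin_Gw:
  fixes Y :: "nat \<Rightarrow> 'a::comm_ring_1^'n::finite^'n"
  shows "multilin (Gw Y W)"
  unfolding multilin_def Gw_def L0_upd
proof (intro allI)
  fix M :: "'n \<times> 'n \<Rightarrow> 'a^'n^'n" and s :: "'n \<times> 'n" and u v c d
  let ?i = "2 * kinv s"
  let ?L = "L0 Y M"
  have il: "?i < length ?L" using kinv_lt[of s] by simp
  have trm: "mprod (drop (2*k) (?L[?i := c *\<^sub>M u + d *\<^sub>M v])) ** W ** mprod (take (2*k) (?L[?i := c *\<^sub>M u + d *\<^sub>M v]))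
     = c *\<^sub>M (mprod (drop (2*k) (?L[?i := u])) ** W ** mprod (take (2*k) (?L[?i := u])))
     + d *\<^sub>M (mprod (drop (2*k) (?L[?i := v])) ** W ** mprod (take (2*k) (?L[?i := v])))"
    if "k < CARD('n \<times> 'n)" for k
  proof (cases "?i < 2*k")
    case True
    have "2 * k \<le> length ?L" using that by simp
    hence "?i < length (take (2*k) ?L)" using True by simp
    thus ?thesis using True
      by (simp add: take_update_swap mprod_update_lin matrix_add_ldistrib)
  next
    case False
    hence "?i - 2*k < length (drop (2*k) ?L)" using il by (simp del: kinv_lt')
    thus ?thesis using False
      by (simp add: drop_update_swap mprod_update_lin matrix_add_rdistrib)
  qed
  let ?A = "\<lambda>k. mprod (drop (2*k) (?L[?i := u])) ** W ** mprod (take (2*k) (?L[?i := u]))"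
  let ?B = "\<lambda>k. mprod (drop (2*k) (?L[?i := v])) ** W ** mprod (take (2*k) (?L[?i := v]))"
  have e: "(\<Sum>k<CARD('n \<times> 'n). mprod (drop (2*k) (?L[?i := c *\<^sub>M u + d *\<^sub>M v])) ** W ** mprod (take (2*k) (?L[?i := c *\<^sub>M u + d *\<^sub>M v])))
     = (\<Sum>k<CARD('n \<times> 'n). c *\<^sub>M ?A k + d *\<^sub>M ?B k)"
    by (rule sum.cong[OF refl]) (rule trm, simp)
  show "(\<Sum>k<CARD('n \<times> 'n). mprod (drop (2*k) (?L[?i := c *\<^sub>M u + d *\<^sub>M v])) ** W ** mprod (take (2*k) (?L[?i := c *\<^sub>M u + d *\<^sub>M v])))
     = c *\<^sub>M (\<Sum>k<CARD('n \<times> 'n). mprod (drop (2*k) (?L[?i := u])) ** W ** mprod (take (2*k) (?L[?i := u])))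
     + d *\<^sub>M (\<Sum>k<CARD('n \<times> 'n). mprod (drop (2*k) (?L[?i := v])) ** W ** mprod (take (2*k) (?L[?i := v])))"
    unfolding e by (simp only: sum.distrib mat_smult_sum2)
qed

lemma trace_sum: "trace (\<Sum>i\<in>S. A i) = (\<Sum>i\<in>S. trace (A i :: 'a::comm_ring_1^'n::finite^'n))"
  by (induct S rule: infinite_finite_induct) (simp_all add: trace_add trace_0[simplified])

lemma trace_smult: "trace (c *\<^sub>M A) = c * trace (A :: 'a::comm_ring_1^'n::finite^'n)"
  by (simp add: trace_def sum_distrib_left)

lemma mat_from_trace:
  fixes A :: "'a::comm_ring_1^'n::finite^'n"
  assumes "\<And>Z. trace (Z ** A) = trace Z * c"
  shows "A = mat c"
proof -
  have "A $ i $ j = mat c $ i $ j" for i j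
  proof -
    have "trace (Eu (j, i) ** A) = A $ i $ j"
    proof -
      have "trace (Eu (j, i) ** A) = (\<Sum>a\<in>UNIV. \<Sum>l\<in>UNIV. (if a = j \<and> l = i then 1 else 0) * A $ l $ a)"
        by (simp add: trace_def matrix_matrix_mult_def Eu_def)
      also have "\<dots> = (\<Sum>a\<in>UNIV. if a = j then A $ i $ a else 0)"
      proof (rule sum.cong[OF refl])
        fix a
        have e: "\<And>x::'a. (if a = j \<and> l = i then 1 else 0) * x = (if l = i then (if a = j then x else 0) else 0)" for l :: 'n
          by simp
        show "(\<Sum>l\<in>UNIV. (if a = j \<and> l = i then 1 else 0) * A $ l $ a) = (if a = j then A $ i $ a else 0)"
          by (simp only: e sum.delta) simp
      qed
      finally show ?thesis by simp
    qed
    moreover have "trace (Eu (j, i) :: 'a^'n^'n) = (if i = j then 1 else 0)"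
    proof (cases "i = j")
      case False
      hence "\<And>a. (if a = j \<and> a = i then 1 else 0) = (0::'a)" by auto
      thus ?thesis using False by (simp add: trace_def Eu_def)
    qed (simp add: trace_def Eu_def)
    ultimately show ?thesis using assms[of "Eu (j,i)"] by (auto simp: mat_def)
  qed
  thus ?thesis by (simp add: vec_eq_iff)
qed

lemma trace_Gw:
  fixes Y :: "nat \<Rightarrow> 'a::comm_ring_1^'n::finite^'n"
  shows "trace (Z ** Gw Y W M) = (\<Sum>k<CARD('n \<times> 'n). trace (Cw Y (M(kap k := Z ** M (kap k))) ** W))"
  unfolding Gw_def matrix_mul_rsum trace_sum
proof (rule sum.cong[OF refl])
  fix k assume "k \<in> {..<CARD('n \<times> 'n)}"
  hence k: "k < CARD('n \<times> 'n)" by simp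
  let ?L = "L0 Y M"
  have kl: "2 * k < length ?L" using k by simp
  have "trace (Z ** (mprod (drop (2*k) ?L) ** W ** mprod (take (2*k) ?L))) =
        trace (mprod (take (2*k) ?L) ** (Z ** (mprod (drop (2*k) ?L) ** W)))"
    by (metis matrix_mul_assoc trace_mul_sym)
  also have "\<dots> = trace ((mprod (take (2*k) ?L) ** Z ** mprod (drop (2*k) ?L)) ** W)"
    by (simp add: matrix_mul_assoc)
  also have "mprod (take (2*k) ?L) ** Z ** mprod (drop (2*k) ?L) = mprod (?L[2*k := Z ** ?L ! (2*k)])"
    by (rule mprod_update_mid[OF kl, symmetric])
  also have "?L[2*k := Z ** ?L ! (2*k)] = L0 Y (M(kap k := Z ** M (kap k)))"
    using k by (simp add: L0_upd nth_L0)
  finally show "trace (Z ** (mprod (drop (2*k) ?L) ** W ** mprod (take (2*k) ?L))) =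
      trace (Cw Y (M(kap k := Z ** M (kap k))) ** W)" by (simp add: Cw_def)
qed

lemma trace_Alt:
  "trace (Z ** Alt G M) = (\<Sum>\<sigma>\<in>{\<sigma>. \<sigma> permutes UNIV}. of_int (sign \<sigma>) * trace (Z ** G (M \<circ> \<sigma>)))"
  by (simp add: Alt_def matrix_mul_rsum trace_sum trace_smult)

lemma Hm_Eu_central:
  fixes Y :: "nat \<Rightarrow> 'a::field_char_0^'n::finite^'n"
  shows "Alt (Gw Y W) Eu = mat (of_nat CARD('n) * trace (Alt (Cw Y) Eu ** W))"
proof (rule mat_from_trace)
  fix Z :: "'a^'n^'n"
  let ?P = "{\<sigma>. \<sigma> permutes (UNIV :: ('n \<times> 'n) set)}"
  let ?F = "\<lambda>\<sigma> s. trace (Cw Y ((Eu(s := Z ** Eu s)) \<circ> \<sigma>) ** W)"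
  have "trace (Z ** Alt (Gw Y W) Eu) = (\<Sum>\<sigma>\<in>?P. of_int (sign \<sigma>) * (\<Sum>s\<in>UNIV. ?F \<sigma> s))"
    unfolding trace_Alt
  proof (rule sum.cong[OF refl])
    fix \<sigma> assume "\<sigma> \<in> ?P"
    hence sp: "\<sigma> permutes UNIV" by simp
    have "trace (Z ** Gw Y W (Eu \<circ> \<sigma>)) = (\<Sum>k<CARD('n \<times> 'n). ?F \<sigma> (\<sigma> (kap k)))"
      unfolding trace_Gw
    proof (rule sum.cong[OF refl])
      fix k
      have "(Eu \<circ> \<sigma>)(kap k := Z ** (Eu \<circ> \<sigma>) (kap k)) = (Eu(\<sigma> (kap k) := Z ** Eu (\<sigma> (kap k)))) \<circ> \<sigma>"
        using permutes_inj[OF sp] by (auto simp: fun_eq_iff inj_eq)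
      thus "trace (Cw Y ((Eu \<circ> \<sigma>)(kap k := Z ** (Eu \<circ> \<sigma>) (kap k))) ** W) = ?F \<sigma> (\<sigma> (kap k))"
        by simp
    qed
    also have "\<dots> = (\<Sum>s\<in>UNIV. ?F \<sigma> s)"
    proof -
      have "bij_betw (\<sigma> \<circ> kap) {0..<CARD('n \<times> 'n)} UNIV"
        using bij_betw_trans[OF kap_bij permutes_imp_bij[OF sp]] by simp
      hence "(\<Sum>k\<in>{0..<CARD('n \<times> 'n)}. ?F \<sigma> ((\<sigma> \<circ> kap) k)) = (\<Sum>s\<in>UNIV. ?F \<sigma> s)"
        by (rule sum.reindex_bij_betw)
      thus ?thesis by (simp add: lessThan_atLeast0)
    qed
    finally show "of_int (sign \<sigma>) * trace (Z ** Gw Y W (Eu \<circ> \<sigma>)) = of_int (sign \<sigma>) * (\<Sum>s\<in>UNIV. ?F \<sigma> s)"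
      by simp
  qed
  also have "\<dots> = (\<Sum>s\<in>UNIV. trace (Alt (Cw Y) (Eu(s := Z ** Eu s)) ** W))"
    by (simp add: Alt_def matrix_mul_lsum trace_sum trace_smult sum_distrib_left)
      (rule sum.swap)
  also have "\<dots> = trace ((\<Sum>s\<in>UNIV. Alt (Cw Y) (Eu(s := Z ** Eu s))) ** W)"
    by (simp add: matrix_mul_lsum trace_sum)
  also have "\<dots> = trace Z * (of_nat CARD('n) * trace (Alt (Cw Y) Eu ** W))"
    by (simp add: trace_sum_lemma[OF multilin_Cw] trace_smult)
  finally show "trace (Z ** Alt (Gw Y W) Eu) = trace Z * (of_nat CARD('n) * trace (Alt (Cw Y) Eu ** W))" .
qed

lemma Eu_mul: "(Eu p :: 'a::comm_ring_1^'n::finite^'n) ** Eu q = (if snd p = fst q then Eu (fst p, snd q) else 0)"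
proof -
  have "(Eu p ** Eu q :: 'a^'n^'n) $ a $ b = (if snd p = fst q then Eu (fst p, snd q) else 0) $ a $ b" for a b
  proof -
    have "(Eu p ** Eu q :: 'a^'n^'n) $ a $ b = (\<Sum>l\<in>UNIV. (if a = fst p \<and> l = snd p then 1 else 0) * (if l = fst q \<and> b = snd q then 1 else 0))"
      by (simp add: matrix_matrix_mult_def Eu_def)
    also have "\<dots> = (\<Sum>l\<in>UNIV. if l = snd p then (if a = fst p \<and> l = fst q \<and> b = snd q then 1 else 0) else 0)"
      by (rule sum.cong) auto
    also have "\<dots> = (if a = fst p \<and> snd p = fst q \<and> b = snd q then 1 else 0)"
      by (subst sum.delta) auto
    finally show ?thesis by (auto simp: Eu_def)
  qed
  thus ?thesis by (simp add: vec_eq_iff)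
qed

definition chain :: "('n \<times> 'n) list \<Rightarrow> bool" where
  "chain ps \<longleftrightarrow> (\<forall>i. Suc i < length ps \<longrightarrow> snd (ps ! i) = fst (ps ! Suc i))"

lemma mprod_chain:
  "ps \<noteq> [] \<Longrightarrow> mprod (map Eu ps) = (if chain ps then (Eu (fst (hd ps), snd (last ps)) :: 'a::comm_ring_1^'n::finite^'n) else 0)"
proof (induct ps)
  case Nil thus ?case by simp
next
  case (Cons p ps)
  show ?case
  proof (cases ps)
    case Nil thus ?thesis by (simp add: chain_def)
  next
    case (Cons q qs)
    have ch: "chain (p # ps) \<longleftrightarrow> snd p = fst q \<and> chain ps"
      unfolding chain_def Cons
      by (auto simp: less_Suc_eq_0_disj)
    have "mprod (map Eu (p # ps)) = (Eu p :: 'a^'n^'n) ** (if chain ps then Eu (fst q, snd (last ps)) else 0)"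
      using Cons.hyps Cons by simp
    thus ?thesis using ch Cons by (auto simp: Eu_mul)
  qed
qed

definition Y0 :: "nat \<Rightarrow> 'a::comm_ring_1^'n::finite^'n" where
  "Y0 m = Eu (snd (kap m), fst (kap (Suc m mod CARD('n \<times> 'n))))"

definition Pch :: "('n::finite \<times> 'n \<Rightarrow> 'n \<times> 'n) \<Rightarrow> ('n \<times> 'n) list" where
  "Pch \<sigma> = map (\<lambda>i. if even i then \<sigma> (kap (i div 2)) else (snd (kap (i div 2)), fst (kap (Suc (i div 2) mod CARD('n \<times> 'n))))) [0..<2 * CARD('n \<times> 'n)]"

lemma L0_Y0: "L0 Y0 (Eu \<circ> \<sigma>) = (map Eu (Pch \<sigma>) :: ('a::comm_ring_1^'n::finite^'n) list)"
  by (simp add: L0_def Pch_def Y0_def)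

lemma chain_id:
  fixes \<sigma> :: "'n::finite \<times> 'n \<Rightarrow> 'n \<times> 'n"
  assumes ch: "chain (Pch \<sigma>)" and sp: "\<sigma> permutes UNIV"
  shows "\<sigma> = id"
proof -
  let ?N = "CARD('n \<times> 'n)"
  have len: "length (Pch \<sigma>) = 2 * ?N" by (simp add: Pch_def)
  have nth: "i < 2 * ?N \<Longrightarrow> Pch \<sigma> ! i = (if even i then \<sigma> (kap (i div 2)) else (snd (kap (i div 2)), fst (kap (Suc (i div 2) mod ?N))))" for i
    by (simp add: Pch_def)
  have sn: "snd (\<sigma> (kap m)) = snd (kap m)" if "m < ?N" for m
  proof -
    have "snd (Pch \<sigma> ! (2*m)) = fst (Pch \<sigma> ! Suc (2*m))"
      using ch that len unfolding chain_def by auto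
    thus ?thesis using that by (simp add: nth)
  qed
  have fs: "fst (\<sigma> (kap (Suc m))) = fst (kap (Suc m))" if "Suc m < ?N" for m
  proof -
    have "snd (Pch \<sigma> ! (Suc (2*m))) = fst (Pch \<sigma> ! Suc (Suc (2*m)))"
      using ch that len unfolding chain_def by auto
    moreover have "Suc (Suc (2*m)) = 2 * Suc m" by simp
    ultimately have "fst (kap (Suc m mod ?N)) = fst (\<sigma> (kap (Suc m)))"
      using that by (simp add: nth del: mult_Suc_right)
    thus ?thesis using that by simp
  qed
  have pos: "\<sigma> (kap m) = kap m" if "0 < m" "m < ?N" for m
    using sn[OF that(2)] fs[of "m - 1"] that by (simp add: prod_eq_iff)
  have N0: "0 < ?N" by simp
  have z: "\<sigma> (kap 0) = kap 0"
  proof (rule ccontr)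
    assume ne: "\<sigma> (kap 0) \<noteq> kap 0"
    let ?x = "\<sigma> (kap 0)"
    have "kinv ?x \<noteq> 0" using ne kap_kinv[of ?x] by metis
    hence "\<sigma> (kap (kinv ?x)) = kap (kinv ?x)" using pos kinv_lt by blast
    hence "\<sigma> ?x = \<sigma> (kap 0)" by simp
    hence "?x = kap 0" using permutes_inj[OF sp] by (simp add: inj_eq)
    thus False using ne by simp
  qed
  have "\<sigma> s = s" for s
  proof -
    have "\<sigma> (kap (kinv s)) = kap (kinv s)"
      using pos[of "kinv s"] z kinv_lt[of s] by (cases "kinv s = 0") auto
    thus ?thesis by simp
  qed
  thus "\<sigma> = id" by auto
qed

lemma chain_Pch_id: "chain (Pch (id :: 'n::finite \<times> 'n \<Rightarrow> 'n \<times> 'n))"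
  unfolding chain_def
proof (intro allI impI)
  fix i assume i: "Suc i < length (Pch (id :: 'n \<times> 'n \<Rightarrow> 'n \<times> 'n))"
  let ?N = "CARD('n \<times> 'n)"
  have i': "Suc i < 2 * ?N" using i by (simp add: Pch_def)
  show "snd (Pch id ! i) = fst (Pch (id :: 'n \<times> 'n \<Rightarrow> 'n \<times> 'n) ! Suc i)"
  proof (cases "even i")
    case True thus ?thesis using i' by (simp add: Pch_def)
  next
    case False
    then obtain m where m0: "i = 2*m + 1" by (rule oddE)
    hence m: "i = Suc (2*m)" by simp
    have "Suc m < ?N" using i' m by simp
    thus ?thesis using i' m by (simp add: Pch_def)
  qed
qed

lemma Capelli_Eu: "Alt (Cw (Y0 :: nat \<Rightarrow> 'a::comm_ring_1^'n::finite^'n)) Eu = Eu (fst (kap 0), fst (kap 0))"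
proof -
  let ?N = "CARD('n \<times> 'n)"
  let ?P = "{\<sigma>. \<sigma> permutes (UNIV :: ('n \<times> 'n) set)}"
  have ne: "Pch \<sigma> \<noteq> []" for \<sigma> :: "'n \<times> 'n \<Rightarrow> 'n \<times> 'n"
    by (simp add: Pch_def)
  have "Alt (Cw (Y0 :: nat \<Rightarrow> 'a^'n^'n)) Eu = (\<Sum>\<sigma>\<in>?P. of_int (sign \<sigma>) *\<^sub>M (if chain (Pch \<sigma>) then (Eu (fst (hd (Pch \<sigma>)), snd (last (Pch \<sigma>))) :: 'a^'n^'n) else 0))"
    by (simp add: Alt_def Cw_def L0_Y0 mprod_chain[OF ne])
  also have "\<dots> = (\<Sum>\<sigma>\<in>?P. if \<sigma> = id then Eu (fst (hd (Pch (id :: 'n \<times> 'n \<Rightarrow> 'n \<times> 'n))), snd (last (Pch (id :: 'n \<times> 'n \<Rightarrow> 'n \<times> 'n)))) else 0)"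
    by (rule sum.cong[OF refl]) (auto simp: chain_Pch_id dest: chain_id)
  also have "\<dots> = Eu (fst (hd (Pch (id :: 'n \<times> 'n \<Rightarrow> 'n \<times> 'n))), snd (last (Pch (id :: 'n \<times> 'n \<Rightarrow> 'n \<times> 'n))))"
    by (simp add: permutes_id)
  also have "hd (Pch (id :: 'n \<times> 'n \<Rightarrow> 'n \<times> 'n)) = kap 0"
    by (simp add: Pch_def hd_map upt_conv_Cons)
  also have "last (Pch (id :: 'n \<times> 'n \<Rightarrow> 'n \<times> 'n)) = (snd (kap (?N - 1)), fst (kap 0))"
  proof -
    have "last (Pch (id :: 'n \<times> 'n \<Rightarrow> 'n \<times> 'n)) = Pch (id :: 'n \<times> 'n \<Rightarrow> 'n \<times> 'n) ! (2 * ?N - 1)"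
      by (simp add: last_conv_nth ne Pch_def)
    also have "\<dots> = (snd (kap (?N - 1)), fst (kap 0))"
    proof -
      have "odd (2 * ?N - 1)" by simp
      moreover have "(2 * ?N - 1) div 2 = ?N - 1" by simp
      moreover have "Suc (?N - 1) = ?N" by simp
      ultimately show ?thesis by (simp add: Pch_def)
    qed
    finally show ?thesis .
  qed
  finally show ?thesis by simp
qed

lemma trace_Eu_diag: "trace (Eu (a, a) :: 'a::comm_ring_1^'n::finite^'n) = 1"
proof -
  have "trace (Eu (a, a) :: 'a^'n^'n) = (\<Sum>i\<in>UNIV. if i = a then 1 else 0)"
    unfolding trace_def by (rule sum.cong) (auto simp: Eu_def)
  thus ?thesis by simp
qed

definition crd :: "'a::comm_ring_1^'n::finite^'n \<Rightarrow> 'a^('n \<times> 'n)" where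
  "crd A = (\<chi> k. coord A k)"

definition uncrd :: "'a::comm_ring_1^('n::finite \<times> 'n) \<Rightarrow> 'a^'n^'n" where
  "uncrd x = (\<chi> i j. x $ (i, j))"

lemma crd_uncrd[simp]: "crd (uncrd x) = x"
  by (simp add: crd_def uncrd_def coord_def vec_eq_iff)

lemma crd_lin: "crd (c *\<^sub>M u + d *\<^sub>M v) = c *s crd u + d *s crd v"
  by (simp add: crd_def coord_def vec_eq_iff)

lemma crd_sum: "crd (\<Sum>i\<in>S. c i *\<^sub>M A i) = (\<Sum>i\<in>S. c i *s crd (A i :: 'a::comm_ring_1^'n::finite^'n))"
  by (induct S rule: infinite_finite_induct) (simp_all add: crd_def coord_def vec_eq_iff)

lemma crd_inj: "crd A = crd B \<Longrightarrow> A = B"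
  by (simp add: crd_def coord_def vec_eq_iff)

lemma Dt_rows: "Dt M = det (\<chi> s. crd (M s))"
  by (simp add: Dt_def crd_def)

lemma Dt_upd_lin:
  fixes M :: "'n::finite \<times> 'n \<Rightarrow> 'a::comm_ring_1^'n^'n"
  shows "Dt (M(s := c *\<^sub>M u + d *\<^sub>M v)) = c * Dt (M(s := u)) + d * Dt (M(s := v))"
proof -
  have r: "\<And>x. (\<chi> i. crd ((M(s := x)) i)) = (\<chi> i. if i = s then crd x else crd (M i))"
    by (simp add: vec_eq_iff)
  have "Dt (M(s := c *\<^sub>M u + d *\<^sub>M v)) = det (\<chi> i. if i = s then c *s crd u + d *s crd v else crd (M i))"
    unfolding Dt_rows r crd_lin ..
  also have "\<dots> = c * det (\<chi> i. if i = s then crd u else crd (M i)) + d * det (\<chi> i. if i = s then crd v else crd (M i))"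
    using det_row_add[of s "\<lambda>_. c *s crd u" "\<lambda>_. d *s crd v" "\<lambda>i. crd (M i)"]
      det_row_mul[of s c "\<lambda>_. crd u" "\<lambda>i. crd (M i)"] det_row_mul[of s d "\<lambda>_. crd v" "\<lambda>i. crd (M i)"]
    by simp
  finally show ?thesis unfolding Dt_rows r .
qed

lemma Dt_upd_sum:
  fixes M :: "'n::finite \<times> 'n \<Rightarrow> 'a::comm_ring_1^'n^'n"
  assumes "finite K"
  shows "Dt (M(s := \<Sum>k\<in>K. c k *\<^sub>M u k)) = (\<Sum>k\<in>K. c k * Dt (M(s := u k)))"
  using assms
proof (induct K)
  case empty
  have "Dt (M(s := 0)) = 0" using Dt_upd_lin[of M s 0 0 0 0] by simp
  thus ?case by (simp only: sum.empty)
next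
  case (insert x F)
  have "Dt (M(s := \<Sum>k\<in>insert x F. c k *\<^sub>M u k)) = Dt (M(s := c x *\<^sub>M u x + 1 *\<^sub>M (\<Sum>k\<in>F. c k *\<^sub>M u k)))"
    using insert(1,2) by (subst sum.insert) auto
  also have "\<dots> = c x * Dt (M(s := u x)) + 1 * Dt (M(s := (\<Sum>k\<in>F. c k *\<^sub>M u k)))"
    by (rule Dt_upd_lin)
  also have "\<dots> = c x * Dt (M(s := u x)) + (\<Sum>k\<in>F. c k * Dt (M(s := u k)))"
    by (simp only: insert(3) mult_1)
  also have "\<dots> = (\<Sum>k\<in>insert x F. c k * Dt (M(s := u k)))"
    using insert(1,2) by (subst sum.insert) auto
  finally show ?case .
qed

lemma Dt_eq_slots:
  fixes M :: "'n::finite \<times> 'n \<Rightarrow> 'a::comm_ring_1^'n^'n"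
  assumes "s \<noteq> s'" "M s = M s'"
  shows "Dt M = 0"
  unfolding Dt_rows by (rule det_identical_rows[OF assms(1)]) (simp add: row_def assms(2) vec_eq_iff)

lemma Dt_swap:
  fixes M :: "'n::finite \<times> 'n \<Rightarrow> 'a::comm_ring_1^'n^'n"
  assumes "s \<noteq> s'"
  shows "Dt (M \<circ> Transposition.transpose s s') = - Dt M"
proof -
  have tp: "Transposition.transpose s s' permutes UNIV" by (rule permutes_swap_id) auto
  have "Dt (M \<circ> Transposition.transpose s s') = det (\<chi> i. (\<chi> s. crd (M s)) $ Transposition.transpose s s' i)"
    by (simp add: Dt_rows)
  also have "\<dots> = of_int (sign (Transposition.transpose s s')) * Dt M"
    unfolding Dt_rows by (rule det_permute_rows[OF tp])
  finally show ?thesis using assms by (simp add: sign_swap_id)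
qed

lemma smult_sum_eq0:
  fixes w :: "nat \<Rightarrow> 'a::field^'n^'m"
  assumes "c *\<^sub>M x + (\<Sum>i\<in>S. a i *\<^sub>M w i) = 0" "c \<noteq> 0"
  shows "x = (\<Sum>i\<in>S. (- a i / c) *\<^sub>M w i)"
proof -
  have "c *\<^sub>M x = - (\<Sum>i\<in>S. a i *\<^sub>M w i)" using assms(1) by (simp add: eq_neg_iff_add_eq_0)
  hence "(1/c) *\<^sub>M (c *\<^sub>M x) = (1/c) *\<^sub>M (- (\<Sum>i\<in>S. a i *\<^sub>M w i))" by simp
  thus ?thesis using assms(2) by (simp add: mat_smult_sum2 sum_negf[symmetric])
qed

lemma cramer:
  fixes B :: "'n::finite \<times> 'n \<Rightarrow> 'a::field^'n^'n" and w :: "nat \<Rightarrow> 'a^'n^'n" and p :: "nat \<Rightarrow> 'n \<times> 'n"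
  assumes pinj: "inj_on p {1..t}"
    and Bw: "\<And>i. i \<in> {1..t} \<Longrightarrow> B (p i) = w i"
    and dep: "\<exists>i\<in>{0..t}. a i \<noteq> 0" "(\<Sum>i\<in>{0..t}. a i *\<^sub>M w i) = 0"
  shows "Dt B *\<^sub>M w 0 = (\<Sum>j\<in>{1..t}. Dt (B(p j := w 0)) *\<^sub>M w j)"
proof -
  have split: "{0..t} = insert 0 {1..t}" by auto
  have s0: "a 0 *\<^sub>M w 0 + (\<Sum>i\<in>{1..t}. a i *\<^sub>M w i) = 0"
    using dep(2) unfolding split by (subst (asm) sum.insert) auto
  show ?thesis
  proof (cases "a 0 = 0")
    case False
    define b where "b i = - a i / a 0" for i
    have w0: "w 0 = (\<Sum>i\<in>{1..t}. b i *\<^sub>M w i)"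
      unfolding b_def by (rule smult_sum_eq0[OF s0 False])
    have Dj: "Dt (B(p j := w 0)) = b j * Dt B" if j: "j \<in> {1..t}" for j
    proof -
      have "Dt (B(p j := w 0)) = (\<Sum>i\<in>{1..t}. b i * Dt (B(p j := w i)))"
        unfolding w0 by (rule Dt_upd_sum) simp
      also have "\<dots> = (\<Sum>i\<in>{1..t}. if i = j then b j * Dt B else 0)"
      proof (rule sum.cong[OF refl])
        fix i assume i: "i \<in> {1..t}"
        show "b i * Dt (B(p j := w i)) = (if i = j then b j * Dt B else 0)"
        proof (cases "i = j")
          case True
          have "B(p j := w j) = B" using Bw[OF j] by auto
          thus ?thesis using True by simp
        next
          case False
          hence pij: "p i \<noteq> p j" using pinj i j by (auto dest: inj_onD)
          have "Dt (B(p j := w i)) = 0"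
            by (rule Dt_eq_slots[of "p j" "p i"]) (use pij Bw[OF i] in auto)
          thus ?thesis using False by simp
        qed
      qed
      also have "\<dots> = b j * Dt B" using j by simp
      finally show ?thesis .
    qed
    have "(\<Sum>j\<in>{1..t}. Dt (B(p j := w 0)) *\<^sub>M w j) = (\<Sum>j\<in>{1..t}. Dt B *\<^sub>M (b j *\<^sub>M w j))"
      by (rule sum.cong[OF refl]) (simp add: Dj mult.commute)
    also have "\<dots> = Dt B *\<^sub>M w 0" by (simp add: w0 mat_smult_sum2)
    finally show ?thesis by simp
  next
    case True
    obtain m where m0: "m \<in> {0..t}" "a m \<noteq> 0" using dep(1) by blast
    have "m \<noteq> 0" using m0(2) True by metis
    hence m: "m \<in> {1..t}" "a m \<noteq> 0" using m0 by auto
    have s1: "(\<Sum>i\<in>{1..t}. a i *\<^sub>M w i) = 0" using s0 True by simp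
    have s2: "a m *\<^sub>M w m + (\<Sum>i\<in>{1..t} - {m}. a i *\<^sub>M w i) = 0"
      using s1 sum.remove[of "{1..t}" m "\<lambda>i. a i *\<^sub>M w i"] m(1) by simp
    define b where "b i = - a i / a m" for i
    have wm: "w m = (\<Sum>i\<in>{1..t} - {m}. b i *\<^sub>M w i)"
      unfolding b_def by (rule smult_sum_eq0[OF s2 m(2)])
    have pm: "\<And>i. i \<in> {1..t} \<Longrightarrow> i \<noteq> m \<Longrightarrow> p i \<noteq> p m" using pinj m(1) by (auto dest: inj_onD)
    have DB: "Dt B = 0"
    proof -
      have "B = B(p m := w m)" using Bw[OF m(1)] by auto
      hence "Dt B = Dt (B(p m := \<Sum>i\<in>{1..t} - {m}. b i *\<^sub>M w i))" using wm by simp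
      also have "\<dots> = (\<Sum>i\<in>{1..t} - {m}. b i * Dt (B(p m := w i)))"
        by (rule Dt_upd_sum) simp
      also have "\<dots> = 0"
      proof (rule sum.neutral, intro ballI)
        fix i assume "i \<in> {1..t} - {m}"
        hence i: "i \<in> {1..t}" "i \<noteq> m" by auto
        have "Dt (B(p m := w i)) = 0"
          by (rule Dt_eq_slots[of "p m" "p i"]) (use pm[OF i] Bw[OF i(1)] in auto)
        thus "b i * Dt (B(p m := w i)) = 0" by simp
      qed
      finally show ?thesis .
    qed
    let ?Q = "Dt (B(p m := w 0))"
    have Dj: "Dt (B(p j := w 0)) = - b j * ?Q" if j: "j \<in> {1..t}" "j \<noteq> m" for j
    proof -
      have pj: "p j \<noteq> p m" using pm[OF j] .
      have e: "B(p j := w 0) = (B(p j := w 0))(p m := w m)" using Bw[OF m(1)] pj by auto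
      have "Dt (B(p j := w 0)) = (\<Sum>i\<in>{1..t} - {m}. b i * Dt ((B(p j := w 0))(p m := w i)))"
        by (subst e, subst wm, rule Dt_upd_sum) simp
      also have "\<dots> = (\<Sum>i\<in>{1..t} - {m}. if i = j then - b j * ?Q else 0)"
      proof (rule sum.cong[OF refl])
        fix i assume "i \<in> {1..t} - {m}"
        hence i: "i \<in> {1..t}" "i \<noteq> m" by auto
        show "b i * Dt ((B(p j := w 0))(p m := w i)) = (if i = j then - b j * ?Q else 0)"
        proof (cases "i = j")
          case True
          have "(B(p j := w 0))(p m := w j) = (B(p m := w 0)) \<circ> Transposition.transpose (p j) (p m)"
            using pj Bw[OF j(1)] by (auto simp: fun_eq_iff Transposition.transpose_def)
          hence "Dt ((B(p j := w 0))(p m := w j)) = - ?Q" using Dt_swap[OF pj] by simp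
          thus ?thesis using True by simp
        next
          case False
          have pij: "p i \<noteq> p j" using False pinj i(1) j(1) by (auto dest: inj_onD)
          have "Dt ((B(p j := w 0))(p m := w i)) = 0"
            by (rule Dt_eq_slots[of "p m" "p i"]) (use pm[OF i] pij Bw[OF i(1)] in auto)
          thus ?thesis using False by simp
        qed
      qed
      also have "\<dots> = - b j * ?Q" using j by simp
      finally show ?thesis .
    qed
    have "(\<Sum>j\<in>{1..t}. Dt (B(p j := w 0)) *\<^sub>M w j) = ?Q *\<^sub>M w m + (\<Sum>j\<in>{1..t} - {m}. Dt (B(p j := w 0)) *\<^sub>M w j)"
      using sum.remove[of "{1..t}" m "\<lambda>j. Dt (B(p j := w 0)) *\<^sub>M w j"] m(1) by simp
    also have "(\<Sum>j\<in>{1..t} - {m}. Dt (B(p j := w 0)) *\<^sub>M w j) = (\<Sum>j\<in>{1..t} - {m}. - (?Q *\<^sub>M (b j *\<^sub>M w j)))"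
      by (rule sum.cong[OF refl]) (simp add: Dj mult.commute)
    also have "?Q *\<^sub>M w m + \<dots> = 0"
    proof -
      have "(\<Sum>j\<in>{1..t} - {m}. - (?Q *\<^sub>M (b j *\<^sub>M w j))) = - (?Q *\<^sub>M w m)"
        by (simp only: sum_negf mat_smult_sum2[symmetric] wm[symmetric])
      thus ?thesis by simp
    qed
    finally have X: "(\<Sum>j\<in>{1..t}. Dt (B(p j := w 0)) *\<^sub>M w j) = 0" .
    show ?thesis by (simp only: DB X mat_smult_0)
  qed
qed

lemma crd_0[simp]: "crd 0 = 0"
  by (simp add: crd_def coord_def vec_eq_iff)

lemma kinv_inj: "kinv s = kinv s' \<Longrightarrow> s = (s' :: 'n::finite \<times> 'n)"
  by (metis kap_kinv)

lemma completion:
  fixes A :: "nat \<Rightarrow> 'a::field^'n::finite^'n"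
  assumes ind: "\<And>a. (\<Sum>i\<in>{1..t}. a i *\<^sub>M A i) = 0 \<Longrightarrow> (\<forall>i\<in>{1..t}. a i = 0)"
  shows "t \<le> CARD('n \<times> 'n) \<and> (\<exists>Zs. Dt (\<lambda>s. if kinv s < t then A (kinv s + 1) else Zs s) \<noteq> 0)"
proof -
  let ?N = "CARD('n \<times> 'n)"
  define v where "v i = crd (A i)" for i
  have vind: "\<forall>i\<in>{1..t}. a i = 0" if "(\<Sum>i\<in>{1..t}. a i *s v i) = 0" for a
  proof -
    have "crd (\<Sum>i\<in>{1..t}. a i *\<^sub>M A i) = crd 0" using that by (simp add: crd_sum v_def)
    hence "(\<Sum>i\<in>{1..t}. a i *\<^sub>M A i) = 0" by (rule crd_inj)
    thus ?thesis by (rule ind)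
  qed
  have vinj: "inj_on v {1..t}"
  proof (rule inj_onI, rule ccontr)
    fix i j assume ij: "i \<in> {1..t}" "j \<in> {1..t}" "v i = v j" "i \<noteq> j"
    let ?a = "\<lambda>k. if k = i then 1 else if k = j then -1 else (0::'a)"
    have "(\<Sum>k\<in>{1..t}. ?a k *s v k) = (\<Sum>k\<in>{1..t}. (if k = i then v i else 0) + (if k = j then - v j else 0))"
      by (rule sum.cong) (use ij in auto)
    also have "\<dots> = v i - v j" using ij by (simp add: sum.distrib)
    also have "\<dots> = 0" using ij by simp
    finally have "\<forall>k\<in>{1..t}. ?a k = 0" by (rule vind)
    hence "?a i = 0" using ij(1) by blast
    thus False by simp
  qed
  define S where "S = v ` {1..t}"
  have Sind: "vec.independent S"
  proof
    assume "vec.dependent S"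
    moreover have fS: "finite S" by (simp add: S_def)
    ultimately obtain u where u: "\<exists>x\<in>S. u x \<noteq> 0" "(\<Sum>x\<in>S. u x *s x) = 0"
      using vec.dependent_finite[OF fS] by blast
    have "(\<Sum>i\<in>{1..t}. u (v i) *s v i) = (\<Sum>x\<in>S. u x *s x)"
      unfolding S_def by (rule sum.reindex[OF vinj, symmetric, unfolded o_def])
    hence "\<forall>i\<in>{1..t}. u (v i) = 0" using u(2) vind by simp
    thus False using u(1) by (auto simp: S_def)
  qed
  obtain B where B: "S \<subseteq> B" "vec.independent B" "UNIV \<subseteq> vec.span B"
    by (rule vec.maximal_independent_subset_extend[OF subset_UNIV Sind])
  have finB: "finite B" using vec.finiteI_independent[OF B(2)] .
  have cardB: "card B = ?N"
    using vec.basis_card_eq_dim[of B UNIV] B by (simp add: card_cart_basis)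
  have cardS: "card S = t" unfolding S_def using card_image[OF vinj] by simp
  have tN: "t \<le> ?N" using card_mono[OF finB B(1)] cardS cardB by simp
  define U where "U = {s :: 'n \<times> 'n. t \<le> kinv s}"
  have kU: "kinv ` U = {t..<?N}"
  proof
    show "kinv ` U \<subseteq> {t..<?N}" using kinv_lt by (auto simp: U_def)
    show "{t..<?N} \<subseteq> kinv ` U"
    proof
      fix m assume "m \<in> {t..<?N}"
      hence "kinv (kap m :: 'n \<times> 'n) = m" "t \<le> m" by auto
      thus "m \<in> kinv ` U" unfolding U_def by (metis (mono_tags) image_eqI mem_Collect_eq)
    qed
  qed
  have cardU: "card U = ?N - t"
  proof -
    have "inj_on kinv U" by (auto intro: inj_onI kinv_inj)
    hence "card (kinv ` U) = card U" by (rule card_image)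
    thus ?thesis using kU by simp
  qed
  have cardBS: "card (B - S) = ?N - t" using card_Diff_subset[OF _ B(1)] finB cardB cardS
    by (metis finite_subset B(1))
  obtain g where g: "bij_betw g U (B - S)"
    using finite_same_card_bij[of U "B - S"] cardU cardBS finB by auto
  define R where "R s = (if kinv s < t then v (kinv s + 1) else g s)" for s
  have Rinj: "inj R"
  proof (rule injI)
    fix s s' assume e: "R s = R s'"
    show "s = s'"
    proof (cases "kinv s < t"; cases "kinv s' < t")
      assume a: "kinv s < t" "kinv s' < t"
      hence "v (kinv s + 1) = v (kinv s' + 1)" using e by (simp add: R_def)
      hence "kinv s + 1 = kinv s' + 1" using vinj a by (auto dest: inj_onD)
      thus ?thesis by (auto intro: kinv_inj)
    next
      assume a: "\<not> kinv s < t" "\<not> kinv s' < t"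
      hence "g s = g s'" "s \<in> U" "s' \<in> U" using e by (auto simp: R_def U_def)
      thus ?thesis using g by (auto simp: bij_betw_def dest: inj_onD)
    next
      assume a: "kinv s < t" "\<not> kinv s' < t"
      have "s' \<in> U" using a by (simp add: U_def)
      hence "R s' \<in> B - S" using bij_betw_apply[OF g] a by (simp add: R_def)
      moreover have "R s \<in> S" using a by (simp add: R_def S_def)
      ultimately have "R s \<in> S" "R s' \<in> B - S" by auto
      thus ?thesis using e by auto
    next
      assume a: "\<not> kinv s < t" "kinv s' < t"
      have "s \<in> U" using a by (simp add: U_def)
      hence "R s \<in> B - S" using bij_betw_apply[OF g] a by (simp add: R_def)
      moreover have "R s' \<in> S" using a by (simp add: R_def S_def)
      ultimately have "R s' \<in> S" "R s \<in> B - S" by auto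
      thus ?thesis using e by auto
    qed
  qed
  have Rimg: "range R = B"
  proof
    show "range R \<subseteq> B"
    proof clarify
      fix s
      show "R s \<in> B"
      proof (cases "kinv s < t")
        case True thus ?thesis using B(1) by (simp add: R_def S_def subset_iff)
      next
        case False
        hence "s \<in> U" by (simp add: U_def)
        thus ?thesis using bij_betw_apply[OF g] False by (simp add: R_def)
      qed
    qed
    show "B \<subseteq> range R"
    proof
      fix x assume x: "x \<in> B"
      show "x \<in> range R"
      proof (cases "x \<in> S")
        case True
        then obtain i where i: "i \<in> {1..t}" "x = v i" by (auto simp: S_def)
        have "i - 1 < ?N" using i tN by auto
        hence "kinv (kap (i - 1) :: 'n \<times> 'n) = i - 1" by simp
        moreover have "i - 1 < t" "i - 1 + 1 = i" using i by auto
        ultimately have "R (kap (i - 1)) = x" using i by (simp add: R_def)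
        thus ?thesis by (metis rangeI)
      next
        case False
        hence "x \<in> g ` U" using g x by (simp add: bij_betw_def)
        then obtain s where s: "s \<in> U" "g s = x" by blast
        hence "R s = x" by (simp add: R_def U_def)
        thus ?thesis by (metis rangeI)
      qed
    qed
  qed
  have Rbij: "bij_betw R UNIV B" using Rinj Rimg by (simp add: bij_betw_def)
  have rowind: "\<forall>s. c s = 0" if c: "(\<Sum>s\<in>UNIV. c s *s row s (\<chi> s. R s)) = 0" for c
  proof
    fix s
    define u where "u x = c (inv_into UNIV R x)" for x
    have "(\<Sum>x\<in>B. u x *s x) = (\<Sum>s\<in>UNIV. u (R s) *s R s)"
      by (rule sum.reindex_bij_betw[OF Rbij, symmetric])
    also have "\<dots> = (\<Sum>s\<in>UNIV. c s *s R s)"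
      by (rule sum.cong) (auto simp: u_def inv_into_f_f[OF Rinj])
    also have "\<dots> = 0" using c by (simp add: row_def)
    finally have "u (R s) = 0" using vec.independentD[OF B(2) finB subset_refl] Rimg by blast
    thus "c s = 0" by (simp add: u_def inv_into_f_f[OF Rinj])
  qed
  have "det (\<chi> s. R s) \<noteq> 0"
    using rowind matrix_right_invertible_independent_rows[of "\<chi> s. R s"]
    by (simp add: invertible_det_nz[symmetric] invertible_right_inverse)
  moreover have "Dt (\<lambda>s. if kinv s < t then A (kinv s + 1) else uncrd (g s)) = det (\<chi> s. R s)"
    unfolding Dt_rows by (rule arg_cong[where f=det]) (simp add: vec_eq_iff R_def v_def)
  ultimately show ?thesis using tN by metis
qed

definition var :: "nat \<Rightarrow> 'a::comm_ring_1 ncpoly" where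
  "var i = Poly_Mapping.single [i] 1"

definition cst :: "'a::comm_ring_1 \<Rightarrow> 'a ncpoly" where
  "cst c = Poly_Mapping.single [] c"

lemma nc_eval_var[simp]: "nc_eval (var i) r = r i"
  by (simp add: var_def nc_eval_single)

lemma nc_eval_cst[simp]: "nc_eval (cst c) r = c *\<^sub>M mat 1"
  by (simp add: cst_def nc_eval_single)

definition nprod :: "'a::comm_ring_1 ncpoly list \<Rightarrow> 'a ncpoly" where
  "nprod ps = foldr ncmul ps (cst 1)"

lemma nc_eval_nprod: "nc_eval (nprod ps) r = mprod (map (\<lambda>p. nc_eval p r) ps)"
  by (induct ps) (simp_all add: nprod_def nc_eval_ncmul)

lemma word_eval_cong: "(\<And>i. i \<in> set w \<Longrightarrow> r i = r' i) \<Longrightarrow> word_eval r w = word_eval r' w"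
  by (induct w) auto

lemma nc_eval_cong:
  assumes "\<And>w i. w \<in> Poly_Mapping.keys p \<Longrightarrow> i \<in> set w \<Longrightarrow> r i = r' i"
  shows "nc_eval p r = nc_eval p r'"
  unfolding nc_eval_def by (rule sum.cong[OF refl]) (metis assms word_eval_cong)

definition Lp :: "('n::finite \<times> 'n \<Rightarrow> 'a::comm_ring_1 ncpoly) \<Rightarrow> nat \<Rightarrow> ('n \<times> 'n \<Rightarrow> 'n \<times> 'n) \<Rightarrow> 'a ncpoly list" where
  "Lp X y0 \<sigma> = map (\<lambda>i. if even i then X (\<sigma> (kap (i div 2))) else var (y0 + i div 2)) [0..<2 * CARD('n \<times> 'n)]"

definition Hpoly :: "('n::finite \<times> 'n \<Rightarrow> 'a::comm_ring_1 ncpoly) \<Rightarrow> nat \<Rightarrow> nat \<Rightarrow> 'a ncpoly" where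
  "Hpoly X y0 wv = (\<Sum>\<sigma>\<in>{\<sigma>. \<sigma> permutes (UNIV :: ('n \<times> 'n) set)}. ncmul (cst (of_int (sign \<sigma>)))
     (\<Sum>k<CARD('n \<times> 'n). ncmul (ncmul (nprod (drop (2*k) (Lp X y0 \<sigma>))) (var wv)) (nprod (take (2*k) (Lp X y0 \<sigma>)))))"

lemma map_Lp: "map (\<lambda>p. nc_eval p r) (Lp X y0 \<sigma>) = L0 (\<lambda>m. r (y0 + m)) ((\<lambda>s. nc_eval (X s) r) \<circ> \<sigma>)"
  by (simp add: Lp_def L0_def)

lemma nc_eval_Hpoly:
  "nc_eval (Hpoly X y0 wv) r = Alt (Gw (\<lambda>m. r (y0 + m)) (r wv)) (\<lambda>s. nc_eval (X s) r)"
  unfolding Hpoly_def Alt_def Gw_def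
  by (simp add: nc_eval_sum nc_eval_ncmul nc_eval_nprod drop_map[symmetric] take_map[symmetric] map_Lp)

lemma mat_mul_left: "mat c ** A = c *\<^sub>M (A :: 'a::comm_ring_1^'n::finite^'n)"
proof -
  have "(mat c ** A) $ i $ j = c * A $ i $ j" for i j
  proof -
    have "(mat c ** A) $ i $ j = (\<Sum>k\<in>UNIV. mat c $ i $ k * A $ k $ j)"
      by (simp add: matrix_matrix_mult_def)
    also have "\<dots> = (\<Sum>k\<in>UNIV. if k = i then c * A $ k $ j else 0)"
      by (rule sum.cong) (auto simp: mat_def)
    finally have "(mat c ** A) $ i $ j = (\<Sum>k\<in>UNIV. if k = i then c * A $ k $ j else 0)" .
    thus ?thesis by simp
  qed
  thus ?thesis by (simp add: vec_eq_iff)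
qed

lemma mat_neq0: "x \<noteq> 0 \<Longrightarrow> (mat x :: 'a::comm_ring_1^'n::finite^'n) \<noteq> 0"
proof
  assume "x \<noteq> 0" "(mat x :: 'a^'n^'n) = 0"
  hence "(mat x :: 'a^'n^'n) $ undefined $ undefined = 0" by simp
  thus False using \<open>x \<noteq> 0\<close> by (simp add: mat_def)
qed

theorem mainTheorem13:
  fixes f :: "nat \<Rightarrow> 'a::field_char_0 ncpoly" and t :: nat
  assumes "loc_lin_dep TYPE('n::finite) f {0..t}"
    and "\<not> loc_lin_dep TYPE('n) f {1..t}"
  shows "\<exists>c :: nat \<Rightarrow> 'a ncpoly.
           (\<forall>i\<in>{0..t}. central_poly TYPE('n) (c i))
         \<and> \<not> poly_identity TYPE('n) (c 0)
         \<and> poly_identity TYPE('n) (\<Sum>i\<in>{0..t}. ncmul (c i) (f i))"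
proof -
  let ?N = "CARD('n \<times> 'n)"
  from assms(2) obtain r0 :: "nat \<Rightarrow> 'a^'n^'n" where r0: "\<not> lin_dep_mats (\<lambda>i. nc_eval (f i) r0) {1..t}"
    unfolding loc_lin_dep_def by blast
  define A where "A i = nc_eval (f i) r0" for i
  have ind: "\<forall>i\<in>{1..t}. a i = 0" if "(\<Sum>i\<in>{1..t}. a i *\<^sub>M A i) = 0" for a
    using r0 that unfolding lin_dep_mats_def A_def by blast
  from completion[OF ind] obtain Zs where tN: "t \<le> ?N"
    and Z: "Dt (\<lambda>s. if kinv s < t then A (kinv s + 1) else Zs s) \<noteq> 0" by blast
  define V0 where "V0 = (\<Union>i\<in>{0..t}. \<Union>w\<in>Poly_Mapping.keys (f i). set w)"
  have finV0: "finite V0" unfolding V0_def by auto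
  define m0 where "m0 = Suc (Max (insert 0 V0))"
  have vlt: "v < m0" if "i \<in> {0..t}" "w \<in> Poly_Mapping.keys (f i)" "v \<in> set w" for i w v
  proof -
    have "v \<in> insert 0 V0" using that unfolding V0_def by blast
    hence "v \<le> Max (insert 0 V0)" using finV0 by simp
    thus ?thesis by (simp add: m0_def)
  qed
  define wv where "wv = m0 + ?N"
  define y0 where "y0 = m0 + ?N + 1"
  define X where "X j s = (if kinv s < t then (if kinv s + 1 = j then f 0 else f (kinv s + 1)) else var (m0 + kinv s))"
    for j and s :: "'n \<times> 'n"
  define c where "c j = (if j = 0 then Hpoly (X 0) y0 wv else - Hpoly (X j) y0 wv)" for j
  define \<kappa> where "\<kappa> r = of_nat CARD('n) * trace (Alt (Cw (\<lambda>m. r (y0 + m))) Eu ** r wv)" for r :: "nat \<Rightarrow> 'a^'n^'n"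
  have evH: "nc_eval (Hpoly (X j) y0 wv) r = mat (Dt (\<lambda>s. nc_eval (X j s) r) * \<kappa> r)" for j r
  proof -
    have "nc_eval (Hpoly (X j) y0 wv) r = Alt (Gw (\<lambda>m. r (y0 + m)) (r wv)) (\<lambda>s. nc_eval (X j s) r)"
      by (rule nc_eval_Hpoly)
    also have "\<dots> = Dt (\<lambda>s. nc_eval (X j s) r) *\<^sub>M Alt (Gw (\<lambda>m. r (y0 + m)) (r wv)) Eu"
      by (rule Alt_det[OF multilin_Gw])
    also have "\<dots> = Dt (\<lambda>s. nc_eval (X j s) r) *\<^sub>M mat (\<kappa> r)"
      unfolding Hm_Eu_central \<kappa>_def ..
    finally show ?thesis by (simp add: mat_smult_mat)
  qed
  have evc: "nc_eval (c j) r = mat ((if j = 0 then 1 else -1) * Dt (\<lambda>s. nc_eval (X j s) r) * \<kappa> r)" for j r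
    by (simp add: c_def evH nc_eval_uminus vec_eq_iff mat_def)
  have central: "\<forall>i\<in>{0..t}. central_poly TYPE('n) (c i)"
    unfolding central_poly_def using evc by blast
  have PI: "poly_identity TYPE('n) (\<Sum>i\<in>{0..t}. ncmul (c i) (f i))"
    unfolding poly_identity_def
  proof
    fix r :: "nat \<Rightarrow> 'a^'n^'n"
    define w where "w i = nc_eval (f i) r" for i
    define MX where "MX j = (\<lambda>s. nc_eval (X j s) r)" for j
    have MX: "MX j s = (if kinv s < t then (if kinv s + 1 = j then w 0 else w (kinv s + 1)) else r (m0 + kinv s))" for j s
      by (simp add: MX_def X_def w_def)
    define B where "B = MX 0"
    have Bw: "B (kap (i - 1)) = w i" if "i \<in> {1..t}" for i
    proof -
      have "i - 1 < ?N" using that tN by auto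
      hence "kinv (kap (i - 1) :: 'n \<times> 'n) = i - 1" by simp
      moreover have "i - 1 < t" "i - 1 + 1 = i" using that by auto
      ultimately show ?thesis by (simp add: B_def MX)
    qed
    have pinj: "inj_on (\<lambda>j. kap (j - 1) :: 'n \<times> 'n) {1..t}"
    proof (rule inj_onI)
      fix i j assume ij: "i \<in> {1..t}" "j \<in> {1..t}" "(kap (i - 1) :: 'n \<times> 'n) = kap (j - 1)"
      hence "i - 1 = j - 1" using tN by (intro kap_inj[where 'n='n]) auto
      thus "i = j" using ij by auto
    qed
    have MXj: "MX j = B(kap (j - 1) := w 0)" if j: "j \<in> {1..t}" for j
    proof
      fix s
      have jl: "j - 1 < ?N" using j tN by auto
      show "MX j s = (B(kap (j - 1) := w 0)) s"
      proof (cases "s = kap (j - 1)")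
        case True
        hence "kinv s = j - 1" using jl by simp
        moreover have "j - 1 < t" "j - 1 + 1 = j" using j by auto
        ultimately show ?thesis using True by (simp add: MX)
      next
        case False
        hence "kinv s \<noteq> j - 1" by (metis kap_kinv)
        hence "kinv s + 1 \<noteq> j" using j by auto
        thus ?thesis using False by (simp add: MX B_def)
      qed
    qed
    from assms(1) have "lin_dep_mats w {0..t}" unfolding loc_lin_dep_def w_def by blast
    then obtain a where a: "\<exists>i\<in>{0..t}. a i \<noteq> 0" "(\<Sum>i\<in>{0..t}. a i *\<^sub>M w i) = 0"
      unfolding lin_dep_mats_def by blast
    have cr: "Dt B *\<^sub>M w 0 = (\<Sum>j\<in>{1..t}. Dt (B(kap (j - 1) := w 0)) *\<^sub>M w j)"
      by (rule cramer[OF pinj Bw a]) auto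
    have "nc_eval (\<Sum>i\<in>{0..t}. ncmul (c i) (f i)) r = (\<Sum>i\<in>{0..t}. ((if i = 0 then 1 else -1) * Dt (MX i) * \<kappa> r) *\<^sub>M w i)"
      by (simp add: nc_eval_sum nc_eval_ncmul evc mat_mul_left MX_def w_def)
    also have "\<dots> = (Dt (MX 0) * \<kappa> r) *\<^sub>M w 0 + (\<Sum>i\<in>{1..t}. (- Dt (MX i) * \<kappa> r) *\<^sub>M w i)"
    proof -
      have "{0..t} = insert 0 {1..t}" by auto
      thus ?thesis by (simp add: sum.insert)
    qed
    also have "(\<Sum>i\<in>{1..t}. (- Dt (MX i) * \<kappa> r) *\<^sub>M w i) = - (\<kappa> r *\<^sub>M (\<Sum>j\<in>{1..t}. Dt (B(kap (j - 1) := w 0)) *\<^sub>M w j))"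
      by (simp add: MXj mat_smult_sum2 sum_negf[symmetric] mult.commute)
    also have "(Dt (MX 0) * \<kappa> r) *\<^sub>M w 0 = \<kappa> r *\<^sub>M (Dt B *\<^sub>M w 0)"
      by (simp add: B_def mult.commute)
    finally have "nc_eval (\<Sum>i\<in>{0..t}. ncmul (c i) (f i)) r = \<kappa> r *\<^sub>M (Dt B *\<^sub>M w 0) + - (\<kappa> r *\<^sub>M (\<Sum>j\<in>{1..t}. Dt (B(kap (j - 1) := w 0)) *\<^sub>M w j))" .
    thus "nc_eval (\<Sum>i\<in>{0..t}. ncmul (c i) (f i)) r = 0" by (simp only: cr right_minus)
  qed
  have nonPI: "\<not> poly_identity TYPE('n) (c 0)"
  proof
    assume pi: "poly_identity TYPE('n) (c 0)"
    define rs :: "nat \<Rightarrow> 'a^'n^'n" where "rs v = (if v < m0 then r0 v else if v < m0 + ?N then Zs (kap (v - m0))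
       else if v = m0 + ?N then mat 1 else Y0 (v - (m0 + ?N + 1)))" for v
    have fi: "nc_eval (f i) rs = A i" if "i \<in> {0..t}" for i
      unfolding A_def by (rule nc_eval_cong) (use vlt[OF that] in \<open>auto simp: rs_def\<close>)
    have M0: "(\<lambda>s. nc_eval (X 0 s) rs) = (\<lambda>s. if kinv s < t then A (kinv s + 1) else Zs s)"
    proof
      fix s :: "'n \<times> 'n"
      show "nc_eval (X 0 s) rs = (if kinv s < t then A (kinv s + 1) else Zs s)"
        using fi[of "kinv s + 1"] kinv_lt[of s] by (auto simp: X_def rs_def)
    qed
    have Yrs: "(\<lambda>m. rs (y0 + m)) = Y0" by (auto simp: rs_def y0_def)
    have Wrs: "rs wv = mat 1" by (simp add: rs_def wv_def)
    have kr: "\<kappa> rs = of_nat CARD('n)"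
      unfolding \<kappa>_def Yrs Wrs Capelli_Eu matrix_mul_rid trace_Eu_diag by simp
    have "nc_eval (c 0) rs = mat ((if (0::nat) = 0 then 1 else -1) * Dt (\<lambda>s. nc_eval (X 0 s) rs) * \<kappa> rs)"
      by (rule evc)
    also have "\<dots> = mat (Dt (\<lambda>s. if kinv s < t then A (kinv s + 1) else Zs s) * of_nat CARD('n))"
      unfolding M0 kr by simp
    finally have ev0: "nc_eval (c 0) rs = mat (Dt (\<lambda>s. if kinv s < t then A (kinv s + 1) else Zs s) * of_nat CARD('n))" .
    have nz: "Dt (\<lambda>s. if kinv s < t then A (kinv s + 1) else Zs s) * of_nat CARD('n) \<noteq> 0"
      using Z by simp
    have "nc_eval (c 0) rs \<noteq> 0" unfolding ev0 by (rule mat_neq0[OF nz])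
    thus False using pi unfolding poly_identity_def by blast
  qed
  show ?thesis by (rule exI[where x=c], intro conjI central nonPI PI)
qed

end
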